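(* Consider the problem $$\min_{x_0\in\mathbb{R}^{n_0},\ldots,x_L\in\mathbb{R}^{n_L}}\ f(x_0,\ldots,x_L)+\sum_{l=1}^L\gamma_lT_{K_l,n_l,1}(x_l)+\delta_{\mathcal{C}}(x_0,\ldots,x_L),$$ where $\mathcal{C}\subset\mathrm{dom} f$ and $f+\delta_{\mathcal{C}}$ is directionally differentiable, and let $x^*=(x_0^*,\ldots,x_L^* )$ be a d-stationary point. Fix $l\in[L]$ and suppose: (B1) for every $x=(x_0,\ldots,x_L)\in\mathcal{C}$ and every $i\in[n_l]$, the direction $(0,\ldots,0,-(x_l)_ie_i,0,\ldots,0)$ (nonzero only in block $l$) belongs to $\mathcal{F}(x;\mathcal{C})$; (B2) there is $\Gamma_l>0$ such that $(f+\delta_{\mathcal C})'(x^*;(0,\ldots,d_l,\ldots,0))\le\Gamma_l$ for all $d_l\in\{-1,0,1\}^{n_l}$ with $\|d_l\|_1=1$ and $(0,\ldots,d_l,\ldots,0)\in\mathcal{F}(x^*;\mathcal{C})$. If $\gamma_l>\Gamma_l$, then $T_{K_l,n_l,1}(x_l^* )=0$.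
   Context: $T_{K,n,1}(x)$ is the sum of the $n-K$ smallest values among $|x_1|,\ldots,|x_n|$; $K_l\in\{0,\ldots,n_l-1\}$, $\gamma_l>0$, $n_0\ge0$. $\delta_{\mathcal C}$ is the indicator function of $\mathcal{C}$ (0 on $\mathcal C$, $+\infty$ outside); $f$ takes values in $(-\infty,\infty]$ and $\mathrm{dom} f=\{x\mid f(x)<\infty\}$. $e_i$ is the $i$-th unit vector. Feasible cone: $\mathcal{F}(x;\mathcal{C})=\{d\mid \exists\varsigma'>0:\ x+\varsigma d\in\mathcal{C}\ \forall\varsigma\in(0,\varsigma')\}$ for $x\in\mathcal C$. Directional derivative $h'(x;d)=\lim_{\varsigma\searrow0}(h(x+\varsigma d)-h(x))/\varsigma$; directional differentiability means it exists in $\mathbb{R}$ for $x\in\mathrm{dom}\,h$, $d\in\mathcal F(x;\mathrm{dom}\,h)$. $x^*$ is d-stationary if the objective's directional derivative at $x^*$ is $\ge0$ for all $d\in\mathcal{F}(x^*;\mathcal{C})$. *)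

theory Defs
  imports "HOL-Analysis.Analysis"
begin

text \<open>Points (x_0,...,x_L) with x_l in R^{n_l} are modelled as functions
  x :: nat => nat => real, where x l i is the i-th coordinate (i < n l) of block l
  (0 <= l <= L); all other entries are zero (see block_space).\<close>

type_synonym point = "nat \<Rightarrow> nat \<Rightarrow> real"

definition block_space :: "nat \<Rightarrow> (nat \<Rightarrow> nat) \<Rightarrow> point set" where
  "block_space L n = {x. \<forall>l i. (L < l \<or> n l \<le> i) \<longrightarrow> x l i = 0}"

definition padd :: "point \<Rightarrow> real \<Rightarrow> point \<Rightarrow> point" where
  "padd x s d = (\<lambda>l i. x l i + s * d l i)"

definition trimmed_l1 :: "nat \<Rightarrow> nat \<Rightarrow> (nat \<Rightarrow> real) \<Rightarrow> real" where
  "trimmed_l1 K n v = sum_list (take (n - K) (sort (map (\<lambda>i. \<bar>v i\<bar>) [0..<n])))"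

definition indicator_fun :: "point set \<Rightarrow> point \<Rightarrow> ereal" where
  "indicator_fun C x = (if x \<in> C then 0 else \<infinity>)"

definition edom :: "(point \<Rightarrow> ereal) \<Rightarrow> point set" where
  "edom h = {x. h x < \<infinity>}"

definition feasible_cone :: "point \<Rightarrow> point set \<Rightarrow> point set" where
  "feasible_cone x C = {d. \<exists>s'>0. \<forall>s. 0 < s \<and> s < s' \<longrightarrow> padd x s d \<in> C}"

definition has_dir_deriv :: "(point \<Rightarrow> ereal) \<Rightarrow> point \<Rightarrow> point \<Rightarrow> real \<Rightarrow> bool" where
  "has_dir_deriv h x d D \<longleftrightarrow>
     ((\<lambda>s. (h (padd x s d) - h x) / ereal s) \<longlongrightarrow> ereal D) (at_right 0)"

definition dir_deriv :: "(point \<Rightarrow> ereal) \<Rightarrow> point \<Rightarrow> point \<Rightarrow> ereal" where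
  "dir_deriv h x d = Lim (at_right 0) (\<lambda>s. (h (padd x s d) - h x) / ereal s)"

definition dir_differentiable :: "(point \<Rightarrow> ereal) \<Rightarrow> bool" where
  "dir_differentiable h \<longleftrightarrow>
     (\<forall>x \<in> edom h. \<forall>d \<in> feasible_cone x (edom h). \<exists>D. has_dir_deriv h x d D)"

definition d_stationary :: "(point \<Rightarrow> ereal) \<Rightarrow> point set \<Rightarrow> point \<Rightarrow> bool" where
  "d_stationary F C x \<longleftrightarrow> x \<in> C \<and> (\<forall>d \<in> feasible_cone x C. dir_deriv F x d \<ge> 0)"

definition embed_block :: "(nat \<Rightarrow> nat) \<Rightarrow> nat \<Rightarrow> (nat \<Rightarrow> real) \<Rightarrow> point" where
  "embed_block n l v = (\<lambda>l' j. if l' = l \<and> j < n l then v j else 0)"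

end

theory Submission
  imports Defs "HOL-Library.Multiset"
begin


lemma sum_list_upd_real:
  "k < length xs \<Longrightarrow> sum_list (xs[k := x]) = sum_list xs + x - xs ! k" for xs :: "real list"
proof (induction xs arbitrary: k)
  case Nil then show ?case by simp
next
  case (Cons a xs) then show ?case by (cases k) auto
qed

lemma sum_list_zero_set: "(\<forall>x\<in>set ys. x = (0::real)) \<Longrightarrow> sum_list ys = 0"
  by (induction ys) auto

lemma sort_upd:
  fixes a sa :: "real list"
  assumes "sorted sa" "mset sa = mset a" "p < length sa" "i < length a" "a!i = sa!p"
    "\<forall>j<p. sa!j \<le> w" "w \<le> sa!p"
  shows "sort (a[i:=w]) = sa[p:=w]"
proof (rule properties_for_sort)
  show "mset (sa[p := w]) = mset (a[i := w])"
    using assms by (simp add: mset_update)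
  show "sorted (sa[p := w])"
    unfolding sorted_iff_nth_mono_less
  proof (intro allI impI)
    fix x y assume xy0: "x < y" "y < length (sa[p := w])"
    then have xy: "x < y \<and> y < length (sa[p := w])" by simp
    have s: "\<And>x y. x \<le> y \<Longrightarrow> y < length sa \<Longrightarrow> sa!x \<le> sa!y"
      using assms(1) by (simp add: sorted_iff_nth_mono)
    show "sa[p := w] ! x \<le> sa[p := w] ! y"
    proof (cases "x = p")
      case True then show ?thesis using xy assms(7) s[of p y] by (auto simp: nth_list_update)
    next
      case False
      show ?thesis
      proof (cases "y = p")
        case True then show ?thesis using xy assms(6) \<open>x \<noteq> p\<close> by (auto simp: nth_list_update)
      next
        case False then show ?thesis using xy \<open>x \<noteq> p\<close> s[of x y] by (auto simp: nth_list_update)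
      qed
    qed
  qed
qed

theorem mainTheorem11:
  fixes L :: nat and n :: "nat \<Rightarrow> nat" and K :: "nat \<Rightarrow> nat" and \<gamma> :: "nat \<Rightarrow> real"
    and f :: "point \<Rightarrow> ereal" and C :: "point set" and xs :: point
    and l :: nat and \<Gamma> :: real
  assumes K: "\<forall>k\<in>{1..L}. K k < n k"
    and gam: "\<forall>k\<in>{1..L}. \<gamma> k > 0"
    and f_ninf: "\<forall>x. f x \<noteq> -\<infinity>"
    and C_sub: "C \<subseteq> block_space L n"
    and C_dom: "C \<subseteq> edom f"
    and dd: "dir_differentiable (\<lambda>x. f x + indicator_fun C x)"
    and stat: "d_stationary
       (\<lambda>x. f x + ereal (\<Sum>k=1..L. \<gamma> k * trimmed_l1 (K k) (n k) (x k)) + indicator_fun C x) C xs"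
    and l: "l \<in> {1..L}"
    and B1: "\<forall>x\<in>C. \<forall>i<n l. embed_block n l (\<lambda>j. if j = i then - x l i else 0) \<in> feasible_cone x C"
    and Gpos: "\<Gamma> > 0"
    and B2: "\<forall>v. (\<forall>i<n l. v i \<in> {-1, 0, 1}) \<and> (\<Sum>i<n l. \<bar>v i\<bar>) = 1
                 \<and> embed_block n l v \<in> feasible_cone xs C
               \<longrightarrow> dir_deriv (\<lambda>x. f x + indicator_fun C x) xs (embed_block n l v) \<le> ereal \<Gamma>"
    and gt: "\<gamma> l > \<Gamma>"
  shows "trimmed_l1 (K l) (n l) (xs l) = 0"
proof (rule ccontr)
  assume T0: "trimmed_l1 (K l) (n l) (xs l) \<noteq> 0"
  define a where "a = map (\<lambda>j. \<bar>xs l j\<bar>) [0..<n l]"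
  define sa where "sa = sort a"
  define k where "k = n l - K l"
  have T: "trimmed_l1 (K l) (n l) (xs l) = sum_list (take k sa)"
    by (simp add: trimmed_l1_def a_def sa_def k_def)
  have len: "length sa = n l" "length a = n l" by (simp_all add: sa_def a_def)
  have setsa: "set sa = set a" by (simp add: sa_def)
  have nonneg: "\<And>j. j < length sa \<Longrightarrow> sa!j \<ge> 0"
  proof -
    fix j assume "j < length sa"
    then have "sa!j \<in> set a" using setsa nth_mem by metis
    then show "sa!j \<ge> 0" by (auto simp: a_def)
  qed
  have "\<exists>j. j < k \<and> j < length sa \<and> sa!j \<noteq> 0"
  proof (rule ccontr)
    assume "\<not> ?thesis"
    then have "\<forall>x\<in>set (take k sa). x = 0"
      by (auto simp: in_set_conv_nth)
    then show False using sum_list_zero_set T T0 by metis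
  qed
  then obtain j0 where j0: "j0 < k" "j0 < length sa" "sa!j0 \<noteq> 0" by blast
  define p where "p = (LEAST j. j < length sa \<and> sa!j \<noteq> 0)"
  have p: "p < length sa" "sa!p \<noteq> 0" using LeastI[of "\<lambda>j. j < length sa \<and> sa!j \<noteq> 0" j0] j0
    unfolding p_def by auto
  have "p \<le> j0" unfolding p_def using j0 by (intro Least_le) auto
  then have pk: "p < k" using j0 by simp
  have below: "\<forall>j<p. sa!j = 0"
    using not_less_Least[of _ "\<lambda>j. j < length sa \<and> sa!j \<noteq> 0"] p(1) unfolding p_def[symmetric]
    by force
  define m where "m = sa!p"
  have m0: "m > 0" using nonneg[OF p(1)] p(2) unfolding m_def by linarith
  have "m \<in> set a" using setsa p(1) nth_mem unfolding m_def by metis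
  then obtain i where i: "i < n l" "\<bar>xs l i\<bar> = m" by (auto simp: a_def)
  have ai: "a!i = sa!p" using i by (simp add: a_def m_def)
  have xsC: "xs \<in> C" using stat by (simp add: d_stationary_def)
  define d0 where "d0 = embed_block n l (\<lambda>j. if j = i then - xs l i else 0)"
  have "d0 \<in> feasible_cone xs C" using B1 xsC i unfolding d0_def by blast
  then obtain s1 where s1: "s1 > 0" "\<forall>s. 0 < s \<and> s < s1 \<longrightarrow> padd xs s d0 \<in> C"
    by (auto simp: feasible_cone_def)
  define v where "v = embed_block n l (\<lambda>j. if j = i then - sgn (xs l i) else 0)"
  have xi0: "xs l i \<noteq> 0" using i m0 by auto
  have pv: "padd xs s v = padd xs (s/m) d0" for s
  proof -
    have "s * sgn (xs l i) = xs l i * (s/m)"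
      using xi0 i(2)[symmetric] by (cases "xs l i > 0") (auto simp: sgn_if)
    then show ?thesis by (auto simp: fun_eq_iff padd_def v_def d0_def embed_block_def)
  qed
  define s0 where "s0 = min (s1*m) m"
  have s0: "s0 > 0" using s1 m0 by (simp add: s0_def)
  have vC: "\<forall>s. 0 < s \<and> s < s0 \<longrightarrow> padd xs s v \<in> C"
  proof (intro allI impI)
    fix s assume "0 < s \<and> s < s0"
    then have "0 < s/m" "s/m < s1" using m0 by (auto simp: s0_def field_simps)
    then show "padd xs s v \<in> C" using s1 pv by simp
  qed
  have vF: "v \<in> feasible_cone xs C" using vC s0 by (auto simp: feasible_cone_def)
  define h where "h = (\<lambda>x. f x + indicator_fun C x)"
  have absv: "(\<lambda>j. \<bar>if j = i then - sgn (xs l i) else 0\<bar>) = (\<lambda>j. if j = i then (1::real) else 0)"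
    using xi0 by (auto simp: fun_eq_iff abs_sgn_eq)
  have B2': "dir_deriv h xs v \<le> ereal \<Gamma>"
    using B2[rule_format, of "\<lambda>j. if j = i then - sgn (xs l i) else 0"] vF i xi0
    unfolding v_def h_def absv by (auto simp: sgn_if)
  have Csub: "C \<subseteq> edom h" using C_dom by (auto simp: edom_def h_def indicator_fun_def)
  have "xs \<in> edom h" using Csub xsC by auto
  moreover have "v \<in> feasible_cone xs (edom h)" using vF Csub by (auto simp: feasible_cone_def)
  ultimately obtain D where hd: "has_dir_deriv h xs v D" using dd unfolding h_def dir_differentiable_def by blast
  have "dir_deriv h xs v = ereal D" using hd unfolding has_dir_deriv_def dir_deriv_def
    by (intro tendsto_Lim) auto
  then have DG: "D \<le> \<Gamma>" using B2' by simp
  define S where "S = (\<lambda>x::point. \<Sum>k=1..L. \<gamma> k * trimmed_l1 (K k) (n k) (x k))"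
  have Sy: "S (padd xs s v) = S xs - \<gamma> l * s" if s: "0 < s" "s < s0" for s
  proof -
    define y where "y = padd xs s v"
    have yl: "map (\<lambda>j. \<bar>y l j\<bar>) [0..<n l] = a[i := m - s]"
    proof (rule nth_equalityI)
      show "length (map (\<lambda>j. \<bar>y l j\<bar>) [0..<n l]) = length (a[i := m - s])" by (simp add: a_def)
      fix j assume "j < length (map (\<lambda>j. \<bar>y l j\<bar>) [0..<n l])"
      then have j: "j < n l" by simp
      have "s < m" using s by (simp add: s0_def)
      then have "\<bar>xs l i + s * - sgn (xs l i)\<bar> = m - s"
        using i(2) xi0 by (cases "xs l i > 0") (auto simp: sgn_if)
      then show "map (\<lambda>j. \<bar>y l j\<bar>) [0..<n l] ! j = a[i := m - s] ! j"
        using j i by (auto simp: y_def padd_def v_def embed_block_def a_def nth_list_update)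
    qed
    have "sort (a[i := m - s]) = sa[p := m - s]"
    proof (rule sort_upd)
      show "sorted sa" by (simp add: sa_def)
      show "mset sa = mset a" by (simp add: sa_def)
      show "\<forall>j<p. sa ! j \<le> m - s" using below s by (simp add: s0_def)
    qed (use p(1) i ai len m_def s in auto)
    then have "trimmed_l1 (K l) (n l) (y l) = sum_list ((take k sa)[p := m - s])"
      using yl by (simp add: trimmed_l1_def k_def take_update_swap)
    also have "\<dots> = sum_list (take k sa) - s"
      using pk p(1) by (subst sum_list_upd_real) (auto simp: m_def)
    finally have tl: "trimmed_l1 (K l) (n l) (y l) = trimmed_l1 (K l) (n l) (xs l) - s" using T by simp
    have oth: "y k' = xs k'" if "k' \<noteq> l" for k'
      using that by (auto simp: y_def padd_def v_def embed_block_def fun_eq_iff)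
    have fin: "finite {1..L}" by simp
    have "S y = \<gamma> l * trimmed_l1 (K l) (n l) (y l) + (\<Sum>k\<in>{1..L}-{l}. \<gamma> k * trimmed_l1 (K k) (n k) (y k))"
      unfolding S_def using sum.remove[OF fin l] by blast
    also have "(\<Sum>k\<in>{1..L}-{l}. \<gamma> k * trimmed_l1 (K k) (n k) (y k)) = (\<Sum>k\<in>{1..L}-{l}. \<gamma> k * trimmed_l1 (K k) (n k) (xs k))"
      using oth by (intro sum.cong) auto
    also have "S xs = \<gamma> l * trimmed_l1 (K l) (n l) (xs l) + (\<Sum>k\<in>{1..L}-{l}. \<gamma> k * trimmed_l1 (K k) (n k) (xs k))"
      unfolding S_def using sum.remove[OF fin l] by blast
    ultimately show ?thesis unfolding y_def[symmetric] using tl by (simp add: algebra_simps)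
  qed
  have fre: "f x = ereal (real_of_ereal (f x))" if "x \<in> C" for x
  proof -
    have "f x < \<infinity>" using that C_dom by (auto simp: edom_def)
    moreover have "f x \<noteq> -\<infinity>" using f_ninf by blast
    ultimately show ?thesis by (cases "f x") auto
  qed
  define g where "g = (\<lambda>s. (real_of_ereal (f (padd xs s v)) - real_of_ereal (f xs)) / s)"
  have ev: "eventually (\<lambda>s. 0 < s \<and> s < s0) (at_right (0::real))"
    using eventually_at_right_real[OF s0] by simp
  have e1: "eventually (\<lambda>s. (h (padd xs s v) - h xs) / ereal s = ereal (g s)) (at_right 0)"
    using ev
  proof (rule eventually_mono)
    fix s assume s: "0 < s \<and> s < s0"
    then have yC: "padd xs s v \<in> C" using vC by blast
    obtain r1 where r1: "f (padd xs s v) = ereal r1" using fre[OF yC] by blast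
    obtain r2 where r2: "f xs = ereal r2" using fre[OF xsC] by blast
    show "(h (padd xs s v) - h xs) / ereal s = ereal (g s)"
      using s unfolding h_def g_def indicator_fun_def
      by (simp add: yC xsC r1 r2)
  qed
  define F where "F = (\<lambda>x. f x + ereal (S x) + indicator_fun C x)"
  have e2: "eventually (\<lambda>s. (F (padd xs s v) - F xs) / ereal s = ereal (g s - \<gamma> l)) (at_right 0)"
    using ev
  proof (rule eventually_mono)
    fix s assume s: "0 < s \<and> s < s0"
    then have yC: "padd xs s v \<in> C" using vC by blast
    have "(F (padd xs s v) - F xs) / ereal s =
       ereal ((real_of_ereal (f (padd xs s v)) + S (padd xs s v) - (real_of_ereal (f xs) + S xs)) / s)"
    proof -
      obtain r1 where r1: "f (padd xs s v) = ereal r1" using fre[OF yC] by blast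
      obtain r2 where r2: "f xs = ereal r2" using fre[OF xsC] by blast
      show ?thesis unfolding F_def indicator_fun_def
        using s by (simp add: yC xsC r1 r2)
    qed
    also have "\<dots> = ereal (g s - \<gamma> l)"
      using s Sy[of s] unfolding g_def by (simp add: field_simps)
    finally show "(F (padd xs s v) - F xs) / ereal s = ereal (g s - \<gamma> l)" .
  qed
  have "((\<lambda>s. ereal (g s)) \<longlongrightarrow> ereal D) (at_right 0)"
    using hd tendsto_cong[OF e1] unfolding has_dir_deriv_def by simp
  then have "(g \<longlongrightarrow> D) (at_right 0)" by simp
  then have "((\<lambda>s. g s - \<gamma> l) \<longlongrightarrow> D - \<gamma> l) (at_right 0)" by (intro tendsto_intros)
  then have "((\<lambda>s. ereal (g s - \<gamma> l)) \<longlongrightarrow> ereal (D - \<gamma> l)) (at_right 0)" by simp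
  then have "((\<lambda>s. (F (padd xs s v) - F xs) / ereal s) \<longlongrightarrow> ereal (D - \<gamma> l)) (at_right 0)"
    using tendsto_cong[OF e2] by simp
  then have "dir_deriv F xs v = ereal (D - \<gamma> l)" unfolding dir_deriv_def
    by (intro tendsto_Lim) auto
  moreover have "dir_deriv F xs v \<ge> 0" using stat vF unfolding d_stationary_def F_def S_def by blast
  ultimately show False using DG gt by simp
qed

end
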